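(* Let $\mathbf b=b_0b_1b_2\cdots\in\{1,-1\}^{\mathbb N}$ be fixed and let $m\ge1$. Let $s_1,s_2\ge 0$ and $d_1,d_2\ge1$ be integers such that $s_2$ and $d_2$ are even. Let $r$ be such that $2^r> s_1+m d_1$, and suppose that for each $i\ge 0$ the following implication holds: if $\mathcal E_{i,1}(s_2,d_2,m)\neq \mathcal E_{i,-1}(s_2,d_2,m)$, then $b_i=b_{i+r}$. Then \[\Delta(s_1,d_1,m)+\Delta(s_2,d_2,m)=\Delta(s_1+2^r s_2,\; d_1+2^r d_2,\; m).\]
   Context: For integers $a$ and $N\ge1$, $(a \bmod N)$ denotes the unique integer in $\{0,\dots,N-1\}$ congruent to $a$ modulo $N$; we write $a\succ c \pmod N$ iff $(a\bmod N)>(c\bmod N)$. For $b\in\{-1,1\}$, $k\ge0$ and integers $0\le\ell\le n$, let $\varepsilon_{k,b}(\ell,n)=1$ if $n-\ell \succ (2+b)\cdot 2^k-(\ell+1) \pmod{2^{k+2}}$ and $\varepsilon_{k,b}(\ell,n)=0$ otherwise. (Equivalently, $\varepsilon_{k,b}(\ell,n)=D_{k,b}(\ell,n)-\lfloor (n-\ell)/2^{k+2}\rfloor$, where $D_{k,b}(\ell,n)$ is the number of integers $i\in(\ell,n]$ with $i\equiv (2+b)2^k \pmod{2^{k+2}}$.) For integers $s\ge0$, $d\ge1$, $m\ge1$ define the vector \[\mathcal E_{k,b}(s,d,m)=\big(\varepsilon_{k,b}(s,s+d),\varepsilon_{k,b}(s+d,s+2d),\dots,\varepsilon_{k,b}(s+(m-1)d,s+md)\big)\]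 and, for the fixed sequence $\mathbf b$, $\Delta(s,d,m)=\sum_{k=0}^{\infty}\mathcal E_{k,b_k}(s,d,m)$ (only finitely many summands are nonzero). *)

theory Defs
  imports Main "HOL-Library.Groups_Big_Fun"
begin

definition succ_mod :: "int \<Rightarrow> int \<Rightarrow> int \<Rightarrow> bool" where
  "succ_mod a c N \<longleftrightarrow> a mod N > c mod N"

definition eps :: "nat \<Rightarrow> int \<Rightarrow> int \<Rightarrow> int \<Rightarrow> int" where
  "eps k b l n = (if succ_mod (n - l) ((2 + b) * 2 ^ k - (l + 1)) (2 ^ (k + 2)) then 1 else 0)"

definition Evec :: "nat \<Rightarrow> int \<Rightarrow> nat \<Rightarrow> nat \<Rightarrow> nat \<Rightarrow> int list" where
  "Evec k b s d m = map (\<lambda>j. eps k b (int (s + j * d)) (int (s + (j + 1) * d))) [0..<m]"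

definition Delta :: "(nat \<Rightarrow> int) \<Rightarrow> nat \<Rightarrow> nat \<Rightarrow> nat \<Rightarrow> int list" where
  "Delta bs s d m = map (\<lambda>j. Sum_any (\<lambda>k. Evec k (bs k) s d m ! j)) [0..<m]"

definition vadd :: "int list \<Rightarrow> int list \<Rightarrow> int list" where
  "vadd xs ys = map2 (+) xs ys"

end

theory Submission
  imports Defs
begin
lemma addmod: "(N::int) dvd t \<Longrightarrow> (a + t) mod N = a mod N"
  by (auto elim!: dvdE)

lemma carry_iff:
  fixes x y N :: int assumes N: "N > 0"
  shows "(y mod N > (-x-1) mod N) \<longleftrightarrow> ((x+y) mod N < x mod N)"
proof -
  define u where "u = x mod N" define p where "p = y mod N"
  have u: "0 \<le> u" "u < N" using N by (auto simp: u_def)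
  have p: "0 \<le> p" "p < N" using N by (auto simp: p_def)
  have xe: "x = N*(x div N) + u" by (simp add: u_def)
  have e: "-x-1 = (N-1-u) + N*(-(x div N)-1)" using xe by (simp add: algebra_simps)
  have "(-x-1) mod N = (N-1-u) mod N" by (simp only: e) (rule addmod, simp)
  also have "\<dots> = N-1-u" using u by (simp add: mod_pos_pos_trivial)
  finally have a: "(-x-1) mod N = N-1-u" .
  have b: "(x+y) mod N = (u+p) mod N" by (simp add: u_def p_def mod_add_eq)
  show ?thesis
  proof (cases "u + p < N")
    case True
    then have "(u+p) mod N = u+p" using u p by (simp add: mod_pos_pos_trivial)
    then show ?thesis using a b p True by (simp add: p_def[symmetric] u_def[symmetric])
  next
    case False
    have "(u+p) mod N = (u+p-N) mod N" using addmod[of N N "u+p-N"] by simp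
    also have "\<dots> = u+p-N" by (intro mod_pos_pos_trivial) (use u p False in auto)
    finally show ?thesis using a b p False by (simp add: p_def[symmetric] u_def[symmetric])
  qed
qed
lemma eps_alt: "eps k b l n = (if (n - (2+b)*2^k) mod 2^(k+2) < (l - (2+b)*2^k) mod 2^(k+2) then 1 else 0)"
proof -
  have "succ_mod (n - l) ((2 + b) * 2 ^ k - (l + 1)) (2 ^ (k + 2)) \<longleftrightarrow>
     ((l - (2+b)*2^k) + (n-l)) mod 2^(k+2) < (l - (2+b)*2^k) mod 2^(k+2)"
    unfolding succ_mod_def using carry_iff[where N="2^(k+2)" and y="n-l" and x="l - (2+b)*2^k"]
    by (simp add: algebra_simps)
  then show ?thesis unfolding eps_def by simp
qed

lemma eps_zero:
  assumes "b \<in> {1,-1}" "0 \<le> l" "l \<le> n" "n < 2^k"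
  shows "eps k b l n = 0"
proof -
  have c: "(2+b)*2^k \<ge> (2::int)^k" "(2+b)*2^k < (2::int)^(k+2)" using assms(1) by auto
  have "(n-l) mod 2^(k+2) = n - l" using assms c by (intro mod_pos_pos_trivial) auto
  moreover have "((2+b)*2^k - (l+1)) mod 2^(k+2) = (2+b)*2^k - (l+1)" using assms c by (intro mod_pos_pos_trivial) auto
  ultimately show ?thesis using assms c unfolding eps_def succ_mod_def by auto
qed


lemma eps_low:
  fixes l1 n1 l2 n2 :: int
  assumes "k < r" "even l2" "even n2"
  shows "eps k b (l1 + 2^r*l2) (n1 + 2^r*n2) = eps k b l1 n1"
proof -
  have d: "(2::int)^(k+2) dvd 2^r * t" if ev: "even t" for t :: int
  proof -
    obtain q where "t = 2*q" using ev by (rule evenE)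
    moreover have "(2::int)^(k+2) dvd 2^(r+1)" by (rule le_imp_power_dvd) (use assms(1) in auto)
    ultimately show ?thesis by (metis dvd_mult2 mult.assoc power_Suc2 Suc_eq_plus1)
  qed
  have ee: "n1 + 2^r*n2 - (l1 + 2^r*l2) = (n1 - l1) + (2^r*n2 - 2^r*l2)" by simp
  have e1: "(n1 + 2^r*n2 - (l1 + 2^r*l2)) mod 2^(k+2) = (n1 - l1) mod 2^(k+2)"
    by (simp only: ee) (rule addmod, rule dvd_diff, rule d[OF assms(3)], rule d[OF assms(2)])
  have ef: "(2+b)*2^k - (l1 + 2^r*l2 + 1) = ((2+b)*2^k - (l1+1)) + (- (2^r*l2))" by simp
  have e2: "((2+b)*2^k - (l1 + 2^r*l2 + 1)) mod 2^(k+2) = ((2+b)*2^k - (l1+1)) mod 2^(k+2)"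
    by (simp only: ef) (rule addmod, simp only: dvd_minus_iff, rule d[OF assms(2)])
  show ?thesis unfolding eps_def succ_mod_def using e1 e2 by simp
qed

lemma mod_split_high:
  fixes a x M N :: int
  assumes "0 \<le> a" "a < M" "N > 0"
  shows "(a + M*x) mod (M*N) = a + M*(x mod N)"
proof -
  have M: "M > 0" using assms by auto
  have "(a + M*x) mod (M*N) = M*((a + M*x) div M mod N) + (a + M*x) mod M"
    using zmod_zmult2_eq[OF less_imp_le[OF assms(3)]] by simp
  moreover have "(a + M*x) div M = x" using assms M by (simp add: div_pos_pos_trivial)
  moreover have "(a + M*x) mod M = a" using assms by (simp add: mod_pos_pos_trivial)
  ultimately show ?thesis by simp
qed

lemma eps_high:
  fixes l1 n1 l2 n2 :: int
  assumes "0 \<le> l1" "l1 \<le> n1" "n1 < 2^r"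
  shows "eps (k+r) b (l1 + 2^r*l2) (n1 + 2^r*n2) = eps k b l2 n2"
proof -
  define M :: int where "M = 2^r"
  define N :: int where "N = 2^(k+2)"
  define c where "c = (2+b)*2^k"
  have M: "M > 0" and N: "N > 0" by (auto simp: M_def N_def)
  have NN: "(2::int)^(k+r+2) = M*N" by (simp add: M_def N_def power_add)
  have cc: "(2+b)*2^(k+r) = M*c" by (simp add: M_def c_def power_add)
  have A: "(l1 + 2^r*l2 - (2+b)*2^(k+r)) mod 2^(k+r+2) = l1 + M*((l2 - c) mod N)"
    unfolding NN cc using mod_split_high[of l1 M N "l2 - c"] assms M N
    by (simp add: M_def algebra_simps)
  have B: "(n1 + 2^r*n2 - (2+b)*2^(k+r)) mod 2^(k+r+2) = n1 + M*((n2 - c) mod N)"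
    unfolding NN cc using mod_split_high[of n1 M N "n2 - c"] assms M N
    by (simp add: M_def algebra_simps)
  define X where "X = (n2 - c) mod N"
  define Y where "Y = (l2 - c) mod N"
  have "n1 + M*X < l1 + M*Y \<longleftrightarrow> X < Y"
  proof
    assume h: "n1 + M*X < l1 + M*Y"
    show "X < Y"
    proof (rule ccontr)
      assume "\<not> X < Y" then have "M*Y \<le> M*X" using M by simp
      then show False using h assms by linarith
    qed
  next
    assume "X < Y" then have "M*(X+1) \<le> M*Y" using M by simp
    then show "n1 + M*X < l1 + M*Y" using assms M_def by (simp add: algebra_simps)
  qed
  then show ?thesis unfolding eps_alt[of "k+r"] eps_alt[of k] A B
    by (simp add: X_def Y_def c_def N_def)
qed


lemma sum_split_shift: "sum f {..<r+K} = sum f {..<r} + sum (\<lambda>k. f (k + r)) {..<(K::nat)}"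
  by (induction K) (simp_all add: ac_simps)

lemma Evec_nth: "j < m \<Longrightarrow> Evec k b s d m ! j = eps k b (int (s + j*d)) (int (s+(j+1)*d))"
  by (simp add: Evec_def)

lemma Delta_nth: "j < m \<Longrightarrow> Delta bs s d m ! j = Sum_any (\<lambda>k. eps k (bs k) (int (s + j*d)) (int (s+(j+1)*d)))"
  by (simp add: Delta_def Evec_nth)

theorem lemma4p1:
  fixes bs :: "nat \<Rightarrow> int" and m s1 s2 d1 d2 r :: nat
  assumes hb: "\<forall>k. bs k \<in> {1, -1}"
    and hm: "m \<ge> 1"
    and hd1: "d1 \<ge> 1" and hd2: "d2 \<ge> 1"
    and he: "even s2" "even d2"
    and hr: "2 ^ r > s1 + m * d1"
    and hi: "\<forall>i. Evec i 1 s2 d2 m \<noteq> Evec i (-1) s2 d2 m \<longrightarrow> bs i = bs (i + r)"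
  shows "vadd (Delta bs s1 d1 m) (Delta bs s2 d2 m) = Delta bs (s1 + 2 ^ r * s2) (d1 + 2 ^ r * d2) m"
proof (rule nth_equalityI)
  show "length (vadd (Delta bs s1 d1 m) (Delta bs s2 d2 m)) = length (Delta bs (s1 + 2 ^ r * s2) (d1 + 2 ^ r * d2) m)"
    by (simp add: vadd_def Delta_def)
next
  fix j assume "j < length (vadd (Delta bs s1 d1 m) (Delta bs s2 d2 m))"
  then have j: "j < m" by (simp add: vadd_def Delta_def)
  define l1 where "l1 = int (s1 + j*d1)"
  define n1 where "n1 = int (s1 + (j+1)*d1)"
  define l2 where "l2 = int (s2 + j*d2)"
  define n2 where "n2 = int (s2 + (j+1)*d2)"
  define K where "K = s2 + (j+1)*d2"
  define f1 where "f1 = (\<lambda>k. eps k (bs k) l1 n1)"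
  define f2 where "f2 = (\<lambda>k. eps k (bs k) l2 n2)"
  define f3 where "f3 = (\<lambda>k. eps k (bs k) (l1 + 2^r*l2) (n1 + 2^r*n2))"
  have L: "int (s1 + 2 ^ r * s2 + j * (d1 + 2 ^ r * d2)) = l1 + 2^r*l2"
    by (simp add: l1_def l2_def algebra_simps)
  have N: "int (s1 + 2 ^ r * s2 + (j+1) * (d1 + 2 ^ r * d2)) = n1 + 2^r*n2"
    by (simp add: n1_def n2_def algebra_simps)
  have l1n1: "0 \<le> l1" "l1 \<le> n1" by (auto simp: l1_def n1_def)
  have "s1 + (j+1)*d1 \<le> s1 + m*d1" using mult_le_mono1[of "j+1" m d1] j by simp
  then have "s1 + (j+1)*d1 < 2^r" using hr by linarith
  then have n1r: "n1 < 2^r" unfolding n1_def by (metis of_nat_less_iff of_nat_numeral of_nat_power)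
  have l2n2: "0 \<le> l2" "l2 \<le> n2" by (auto simp: l2_def n2_def)
  have "K < 2^K" by (rule less_exp)
  then have n2K: "n2 < 2^K" unfolding n2_def K_def by (metis of_nat_less_iff of_nat_numeral of_nat_power)
  have ev2: "even l2" "even n2" using he by (auto simp: l2_def n2_def)
  have S1: "Sum_any f1 = sum f1 {..<r}"
  proof (rule Sum_any.expand_superset)
    show "{a. f1 a \<noteq> 0} \<subseteq> {..<r}"
    proof
      fix k assume "k \<in> {a. f1 a \<noteq> 0}"
      then have nz: "f1 k \<noteq> 0" by simp
      show "k \<in> {..<r}"
      proof (rule ccontr)
        assume "k \<notin> {..<r}"
        then have "(2::int)^r \<le> 2^k" by simp
        then have "n1 < 2^k" using n1r by linarith
        then have "f1 k = 0" unfolding f1_def using eps_zero[OF hb[rule_format, of k] l1n1] by blast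
        then show False using nz by simp
      qed
    qed
  qed simp
  have S2: "Sum_any f2 = sum f2 {..<K}"
  proof (rule Sum_any.expand_superset)
    show "{a. f2 a \<noteq> 0} \<subseteq> {..<K}"
    proof
      fix k assume "k \<in> {a. f2 a \<noteq> 0}"
      then have nz: "f2 k \<noteq> 0" by simp
      show "k \<in> {..<K}"
      proof (rule ccontr)
        assume "k \<notin> {..<K}"
        then have "(2::int)^K \<le> 2^k" by simp
        then have "n2 < 2^k" using n2K by linarith
        then have "f2 k = 0" unfolding f2_def using eps_zero[OF hb[rule_format, of k] l2n2] by blast
        then show False using nz by simp
      qed
    qed
  qed simp
  have S3: "Sum_any f3 = sum f3 {..<r+K}"
  proof (rule Sum_any.expand_superset)
    show "{a. f3 a \<noteq> 0} \<subseteq> {..<r+K}"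
    proof
      fix k assume "k \<in> {a. f3 a \<noteq> 0}"
      then have nz: "f3 k \<noteq> 0" by simp
      show "k \<in> {..<r+K}"
      proof (rule ccontr)
        assume "k \<notin> {..<r+K}"
        then have kk: "k = (k - r) + r" "(2::int)^K \<le> 2^(k-r)" by auto
        have "f3 k = eps (k - r) (bs k) l2 n2"
          unfolding f3_def by (subst kk(1), rule eps_high[OF l1n1 n1r]) 
        have "n2 < 2^(k-r)" using n2K kk(2) by linarith
        then have "eps (k - r) (bs k) l2 n2 = 0" using eps_zero[OF hb[rule_format, of k] l2n2] by blast
        then show False using nz \<open>f3 k = eps (k - r) (bs k) l2 n2\<close> by simp
      qed
    qed
  qed simp
  have low: "sum f3 {..<r} = sum f1 {..<r}"
    by (rule sum.cong) (auto simp: f1_def f3_def intro: eps_low[OF _ ev2])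
  have high: "f3 (k + r) = f2 k" for k
  proof -
    have "f3 (k + r) = eps k (bs (k+r)) l2 n2" unfolding f3_def by (rule eps_high[OF l1n1 n1r])
    also have "\<dots> = eps k (bs k) l2 n2"
    proof (cases "bs k = bs (k + r)")
      case False
      then have "Evec k 1 s2 d2 m = Evec k (-1) s2 d2 m" using hi by blast
      then have "Evec k 1 s2 d2 m ! j = Evec k (-1) s2 d2 m ! j" by simp
      then have "eps k 1 l2 n2 = eps k (-1) l2 n2" using j by (simp add: Evec_nth l2_def n2_def)
      then show ?thesis using hb[rule_format, of k] hb[rule_format, of "k+r"] by auto
    qed simp
    finally show ?thesis by (simp add: f2_def)
  qed
  have comp: "Sum_any f1 + Sum_any f2 = Sum_any f3"
    using S1 S2 S3 low high sum_split_shift[of f3 r K] by simp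
  have A: "Delta bs s1 d1 m ! j = Sum_any f1"
    unfolding Delta_nth[OF j] f1_def l1_def n1_def ..
  have B: "Delta bs s2 d2 m ! j = Sum_any f2"
    unfolding Delta_nth[OF j] f2_def l2_def n2_def ..
  have C: "Delta bs (s1 + 2 ^ r * s2) (d1 + 2 ^ r * d2) m ! j = Sum_any f3"
    unfolding Delta_nth[OF j] L N f3_def ..
  have V: "vadd (Delta bs s1 d1 m) (Delta bs s2 d2 m) ! j = Delta bs s1 d1 m ! j + Delta bs s2 d2 m ! j"
    using j by (simp add: vadd_def Delta_def del: Delta_nth)
  show "vadd (Delta bs s1 d1 m) (Delta bs s2 d2 m) ! j = Delta bs (s1 + 2 ^ r * s2) (d1 + 2 ^ r * d2) m ! j"
    unfolding V A B C comp ..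
qed

end
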